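(* Let $A\in\mathcal F$ with $\mathbb P(A)>0$, and for $k\ge1$ let $m_k(\omega)$ be the $k$-th visiting time of the $\theta$-orbit of $\omega$ to $A$, i.e. $m_1(\omega)=\min\{n\ge1:\theta^n\omega\in A\}$ and $m_{k+1}(\omega)=\min\{n>m_k(\omega):\theta^n\omega\in A\}$. If $m_1\in L^p(\Omega,\mathcal F,\mathbb P)$ for some $p>0$, then for every $0<\delta<p$ there exists $B\in L^{p/2-\delta}(\Omega,\mathcal F,\mathbb P)$ such that for $\mathbb P$-a.e. $\omega$ and all $k\ge1$, $$m_k(\omega)\le B(\omega)k^{1+1/p+\delta}.$$
   Context: $(\Omega,\mathcal F,\mathbb P,\theta)$ is the shift system of a stationary sequence indexed by $\mathbb Z$; $\theta$ is an invertible measurable map preserving $\mathbb P$. *)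

theory Defs
  imports "HOL-Probability.Probability"
begin

fun visit_time :: "('a \<Rightarrow> 'a) \<Rightarrow> 'a set \<Rightarrow> nat \<Rightarrow> 'a \<Rightarrow> enat" where
  "visit_time T A 0 x = 0"
| "visit_time T A (Suc k) x =
     (if \<exists>n. enat n > visit_time T A k x \<and> (T ^^ n) x \<in> A
      then enat (LEAST n. enat n > visit_time T A k x \<and> (T ^^ n) x \<in> A)
      else \<infinity>)"

definition in_Lp :: "'a measure \<Rightarrow> real \<Rightarrow> ('a \<Rightarrow> real) \<Rightarrow> bool" where
  "in_Lp M q f \<longleftrightarrow> f \<in> borel_measurable M \<and> integrable M (\<lambda>x. \<bar>f x\<bar> powr q)"

end

theory Submission
  imports Defs
begin

definition nxt :: "('a \<Rightarrow> 'a) \<Rightarrow> 'a set \<Rightarrow> 'a \<Rightarrow> nat \<Rightarrow> nat" where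
  "nxt T A x i = (LEAST n. i < n \<and> (T ^^ n) x \<in> A)"

primrec mmv :: "('a \<Rightarrow> 'a) \<Rightarrow> 'a set \<Rightarrow> 'a \<Rightarrow> nat \<Rightarrow> nat" where
  "mmv T A x 0 = 0"
| "mmv T A x (Suc k) = nxt T A x (mmv T A x k)"

lemma vt1_unfold:
  "visit_time T A 1 y = (if \<exists>n. 0 < n \<and> (T ^^ n) y \<in> A
      then enat (LEAST n. 0 < n \<and> (T ^^ n) y \<in> A) else \<infinity>)"
  by (simp add: One_nat_def zero_enat_def)

lemma funpow_sub_add: "i \<le> n \<Longrightarrow> (T ^^ (n - i)) ((T ^^ i) x) = (T ^^ n) x"
  by (metis funpow_add le_add_diff_inverse2 o_apply)

lemma nxt_ex:
  assumes H: "\<forall>i. visit_time T A 1 ((T ^^ i) x) \<noteq> \<infinity>"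
  shows "\<exists>n. i < n \<and> (T ^^ n) x \<in> A"
proof -
  from H have "visit_time T A 1 ((T ^^ i) x) \<noteq> \<infinity>" by blast
  then obtain m where "0 < m" "(T ^^ m) ((T ^^ i) x) \<in> A"
    unfolding vt1_unfold by (auto split: if_splits)
  then show ?thesis
    by (intro exI[of _ "m + i"]) (simp add: funpow_add)
qed

lemma nxt_props:
  assumes H: "\<forall>i. visit_time T A 1 ((T ^^ i) x) \<noteq> \<infinity>"
  shows "i < nxt T A x i" "(T ^^ nxt T A x i) x \<in> A"
    "i < n \<Longrightarrow> n < nxt T A x i \<Longrightarrow> (T ^^ n) x \<notin> A"
proof -
  have "i < nxt T A x i \<and> (T ^^ nxt T A x i) x \<in> A"
    unfolding nxt_def by (rule LeastI_ex) (rule nxt_ex[OF H])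
  then show "i < nxt T A x i" "(T ^^ nxt T A x i) x \<in> A" by auto
  show "i < n \<Longrightarrow> n < nxt T A x i \<Longrightarrow> (T ^^ n) x \<notin> A"
    unfolding nxt_def using not_less_Least by blast
qed

lemma F_eq:
  assumes H: "\<forall>i. visit_time T A 1 ((T ^^ i) x) \<noteq> \<infinity>"
  shows "visit_time T A 1 ((T ^^ i) x) = enat (nxt T A x i - i)"
proof -
  note P = nxt_props[OF H]
  have ex: "\<exists>n. 0 < n \<and> (T ^^ n) ((T ^^ i) x) \<in> A"
    using P(1,2)[of i] by (intro exI[of _ "nxt T A x i - i"]) (simp add: funpow_sub_add)
  have "(LEAST n. 0 < n \<and> (T ^^ n) ((T ^^ i) x) \<in> A) = nxt T A x i - i"
  proof (rule Least_equality)
    show "0 < nxt T A x i - i \<and> (T ^^ (nxt T A x i - i)) ((T ^^ i) x) \<in> A"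
      using P(1,2)[of i] by (simp add: funpow_sub_add)
  next
    fix m assume m: "0 < m \<and> (T ^^ m) ((T ^^ i) x) \<in> A"
    show "nxt T A x i - i \<le> m"
    proof (rule ccontr)
      assume "\<not> nxt T A x i - i \<le> m"
      then have "m + i < nxt T A x i" by simp
      moreover have "i < m + i" using m by simp
      ultimately have "(T ^^ (m + i)) x \<notin> A" using P(3) by blast
      then show False using m by (simp add: funpow_add)
    qed
  qed
  then show ?thesis unfolding vt1_unfold using ex by simp
qed

lemma nxt_const:
  assumes H: "\<forall>i. visit_time T A 1 ((T ^^ i) x) \<noteq> \<infinity>"
    and "i \<le> j" "j < nxt T A x i"
  shows "nxt T A x j = nxt T A x i"
proof -
  note P = nxt_props[OF H]
  have "nxt T A x j \<le> nxt T A x i"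
    unfolding nxt_def[of T A x j] using assms(3) P(2)[of i] by (intro Least_le) simp
  moreover have "\<not> nxt T A x j < nxt T A x i"
    using P(3)[of i "nxt T A x j"] P(1)[of j] P(2)[of j] assms(2) by linarith
  ultimately show ?thesis by simp
qed

lemma vt_eq:
  assumes H: "\<forall>i. visit_time T A 1 ((T ^^ i) x) \<noteq> \<infinity>"
  shows "visit_time T A k x = enat (mmv T A x k)"
proof (induction k)
  case 0 then show ?case by (simp add: zero_enat_def)
next
  case (Suc k)
  have "\<exists>n. mmv T A x k < n \<and> (T ^^ n) x \<in> A" by (rule nxt_ex[OF H])
  then show ?case using Suc by (simp add: nxt_def)
qed

lemma mmv_mono: 
  assumes H: "\<forall>i. visit_time T A 1 ((T ^^ i) x) \<noteq> \<infinity>"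
  shows "j \<le> k \<Longrightarrow> mmv T A x j \<le> mmv T A x k"
proof (induction k)
  case 0 then show ?case by simp
next
  case (Suc k)
  have "mmv T A x k < mmv T A x (Suc k)" using nxt_props(1)[OF H] by simp
  then show ?case using Suc by (cases "j = Suc k") auto
qed

lemma mmv_ge:
  assumes H: "\<forall>i. visit_time T A 1 ((T ^^ i) x) \<noteq> \<infinity>"
  shows "k \<le> mmv T A x k"
proof (induction k)
  case 0 then show ?case by simp
next
  case (Suc k)
  have "mmv T A x k < mmv T A x (Suc k)" using nxt_props(1)[OF H] by simp
  then show ?case using Suc by simp
qed

lemma mmv_telescope:
  assumes H: "\<forall>i. visit_time T A 1 ((T ^^ i) x) \<noteq> \<infinity>"
  shows "mmv T A x k = (\<Sum>j<k. mmv T A x (Suc j) - mmv T A x j)"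
proof (induction k)
  case 0 then show ?case by simp
next
  case (Suc k)
  have "mmv T A x k < mmv T A x (Suc k)" using nxt_props(1)[OF H] by simp
  then show ?case using Suc by simp
qed

lemma gap_exists:
  assumes H: "\<forall>i. visit_time T A 1 ((T ^^ i) x) \<noteq> \<infinity>" and k: "1 \<le> k"
  shows "\<exists>j<k. mmv T A x k \<le> k * (mmv T A x (Suc j) - mmv T A x j)"
proof (rule ccontr)
  assume "\<not> ?thesis"
  then have lt: "\<And>j. j < k \<Longrightarrow> k * (mmv T A x (Suc j) - mmv T A x j) < mmv T A x k"
    by (simp add: not_le)
  have "k * mmv T A x k = (\<Sum>j<k. k * (mmv T A x (Suc j) - mmv T A x j))"
    by (subst mmv_telescope[OF H]) (simp add: sum_distrib_left)
  also have "\<dots> < (\<Sum>j<k. mmv T A x k)"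
    apply (rule sum_strict_mono)
      apply simp
    using k apply (metis empty_iff lessThan_iff less_le_trans zero_less_one)
    using lt by (simp del: mmv.simps)
  also have "\<dots> = k * mmv T A x k" by simp
  finally show False by simp
qed

lemma block_bound:
  fixes p :: real
  assumes H: "\<forall>i. visit_time T A 1 ((T ^^ i) x) \<noteq> \<infinity>" and k: "1 \<le> k" and p: "0 < p"
  shows "(real (mmv T A x k) / (2 * real k)) powr (1 + p)
      \<le> (\<Sum>i<mmv T A x k. real (nxt T A x i - i) powr p)"
proof -
  obtain j where j: "j < k" and gj: "mmv T A x k \<le> k * (mmv T A x (Suc j) - mmv T A x j)"
    using gap_exists[OF H k] by blast
  define a where "a = mmv T A x j"
  define b where "b = mmv T A x (Suc j)"
  define G where "G = b - a"
  have ab: "a < b" unfolding a_def b_def using nxt_props(1)[OF H] by simp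
  have bnxt: "b = nxt T A x a" unfolding a_def b_def by simp
  have bk: "b \<le> mmv T A x k" unfolding b_def using mmv_mono[OF H, of "Suc j" k] j by simp
  have G1: "1 \<le> G" using ab unfolding G_def by simp
  define w where "w i = real (nxt T A x i - i) powr p" for i
  have "(\<Sum>i\<in>{a..<b}. w i) \<le> (\<Sum>i<mmv T A x k. w i)"
    using bk by (intro sum_mono2) (auto simp: w_def)
  moreover have "(\<Sum>i\<in>{a..<b}. w i) = (\<Sum>t<G. w (a + t))"
  proof -
    have "{a..<b} = {0+a..<(b-a)+a}" using ab by simp
    then have "(\<Sum>i\<in>{a..<b}. w i) = (\<Sum>t\<in>{0..<b-a}. w (t + a))"
      by (simp only: sum.shift_bounds_nat_ivl)
    then show ?thesis unfolding G_def by (simp add: lessThan_atLeast0 add.commute)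
  qed
  moreover have "w (a + t) = real (G - t) powr p" if "t < G" for t
  proof -
    have "nxt T A x (a + t) = b" using nxt_const[OF H, of a "a + t"] that bnxt
      unfolding G_def by simp
    then show ?thesis unfolding w_def G_def by simp
  qed
  then have "(\<Sum>t<G. w (a + t)) = (\<Sum>t<G. real (G - t) powr p)" by simp
  moreover have "(\<Sum>t<Suc (G div 2). real (G - t) powr p) \<le> (\<Sum>t<G. real (G - t) powr p)"
    using G1 by (intro sum_mono2) auto
  moreover have "(\<Sum>t<Suc (G div 2). (real G / 2) powr p) \<le> (\<Sum>t<Suc (G div 2). real (G - t) powr p)"
  proof (intro sum_mono)
    fix t assume "t \<in> {..<Suc (G div 2)}"
    then have "real G / 2 \<le> real (G - t)" by auto
    then show "(real G / 2) powr p \<le> real (G - t) powr p"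
      using p by (intro powr_mono2) auto
  qed
  moreover have "(real G / 2) powr (1 + p) \<le> (\<Sum>t<Suc (G div 2). (real G / 2) powr p)"
  proof -
    have "(real G / 2) powr (1 + p) = (real G / 2) * (real G / 2) powr p"
      using G1 by (simp add: powr_add)
    also have "\<dots> \<le> real (Suc (G div 2)) * (real G / 2) powr p"
      by (intro mult_right_mono) auto
    finally show ?thesis by simp
  qed
  moreover have "(real (mmv T A x k) / (2 * real k)) powr (1 + p) \<le> (real G / 2) powr (1 + p)"
  proof -
    have "real (mmv T A x k) \<le> real k * real G" using gj unfolding G_def a_def b_def
      by (simp flip: of_nat_mult)
    then have "real (mmv T A x k) / (2 * real k) \<le> real G / 2"
      using k by (simp add: field_simps)
    then show ?thesis using p by (intro powr_mono2) auto
  qed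
  ultimately show ?thesis unfolding w_def by linarith
qed

lemma alg_bound:
  fixes m k S p \<epsilon> :: real
  assumes m: "1 \<le> m" and k: "1 \<le> k" and S: "0 \<le> S" and e: "0 < \<epsilon>" "\<epsilon> < p"
    and h: "(m / (2 * k)) powr (1 + p) \<le> S * m powr (1 + \<epsilon>)"
  shows "m \<le> (2 powr (1 + p) * S) powr (1 / (p - \<epsilon>)) * k powr ((1 + p) / (p - \<epsilon>))"
proof -
  have "(m / (2 * k)) powr (1 + p) = m powr (1 + p) / (2 * k) powr (1 + p)"
    using m k by (simp add: powr_divide)
  then have "m powr (1 + p) \<le> S * m powr (1 + \<epsilon>) * (2 * k) powr (1 + p)"
    using h k by (simp add: divide_le_eq)
  moreover have "m powr (1 + p) = m powr (1 + \<epsilon>) * m powr (p - \<epsilon>)"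
    by (simp add: powr_add[symmetric])
  ultimately have "m powr (1 + \<epsilon>) * m powr (p - \<epsilon>) \<le> m powr (1 + \<epsilon>) * (S * (2 * k) powr (1 + p))"
    by (simp add: ac_simps)
  then have "m powr (p - \<epsilon>) \<le> S * (2 * k) powr (1 + p)"
    using m by (subst (asm) mult_le_cancel_left_pos) auto
  also have "\<dots> = (2 powr (1 + p) * S) * k powr (1 + p)"
    using k by (simp add: powr_mult)
  finally have A: "m powr (p - \<epsilon>) \<le> (2 powr (1 + p) * S) * k powr (1 + p)" .
  have "m = (m powr (p - \<epsilon>)) powr (1 / (p - \<epsilon>))"
    using m e by (simp add: powr_powr)
  also have "\<dots> \<le> ((2 powr (1 + p) * S) * k powr (1 + p)) powr (1 / (p - \<epsilon>))"
    using A e by (intro powr_mono2) auto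
  also have "\<dots> = (2 powr (1 + p) * S) powr (1 / (p - \<epsilon>)) * (k powr (1 + p)) powr (1 / (p - \<epsilon>))"
    using S k by (simp add: powr_mult)
  also have "(k powr (1 + p)) powr (1 / (p - \<epsilon>)) = k powr ((1 + p) / (p - \<epsilon>))"
    by (simp add: powr_powr)
  finally show ?thesis .
qed

lemma exp_bound:
  fixes p \<delta> :: real
  assumes p: "0 < p" and d: "0 < \<delta>"
  defines "\<epsilon> \<equiv> min (p / 2) (\<delta> * p^2 / (2 * (1 + p)))"
  shows "0 < \<epsilon>" "\<epsilon> \<le> p / 2" "(1 + p) / (p - \<epsilon>) \<le> 1 + 1 / p + \<delta>"
proof -
  show e0: "0 < \<epsilon>" using p d unfolding \<epsilon>_def by (auto intro: divide_pos_pos)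
  show e1: "\<epsilon> \<le> p / 2" unfolding \<epsilon>_def by (rule min.cobounded1)
  have e3: "\<epsilon> \<le> \<delta> * p^2 / (2 * (1 + p))" unfolding \<epsilon>_def by (rule min.cobounded2)
  have e2: "\<epsilon> * (2 * (1 + p)) \<le> \<delta> * p^2"
    using e3 p by (simp add: pos_le_divide_eq)
  have a: "\<epsilon> * (1 + p) \<le> \<delta> * p^2 / 2" using e2 by (simp add: algebra_simps)
  have b: "\<epsilon> * (\<delta> * p) \<le> (p / 2) * (\<delta> * p)"
    using e1 p d by (intro mult_right_mono) auto
  have c: "\<epsilon> * p + \<epsilon> * \<delta> * p + \<epsilon> \<le> \<delta> * p^2"
    using a b by (simp add: algebra_simps power2_eq_square)
  have c2: "\<epsilon> + \<epsilon> * \<delta> + \<epsilon> / p \<le> \<delta> * p"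
  proof -
    have "(\<epsilon> + \<epsilon> * \<delta> + \<epsilon> / p) * p = \<epsilon> * p + \<epsilon> * \<delta> * p + \<epsilon>"
      using p by (simp add: algebra_simps)
    also have "\<dots> \<le> (\<delta> * p) * p" using c by (simp add: power2_eq_square)
    finally show ?thesis using p by simp
  qed
  have d2: "(p - \<epsilon>) * (1 + 1 / p + \<delta>) = p + \<delta> * p - \<epsilon> - \<epsilon> * \<delta> + 1 - \<epsilon> / p"
    using p by (simp add: field_simps)
  have "1 + p \<le> (1 + 1 / p + \<delta>) * (p - \<epsilon>)" using c2 d2 by (simp add: mult.commute)
  moreover have "0 < p - \<epsilon>" using e1 p by simp
  ultimately show "(1 + p) / (p - \<epsilon>) \<le> 1 + 1 / p + \<delta>" by (simp add: pos_divide_le_eq)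
qed

lemma sum_bound:
  fixes v :: "nat \<Rightarrow> real" and S :: ennreal
  assumes "\<And>i. 0 \<le> v i" "(\<Sum>i. ennreal (v i)) = S" "S \<noteq> \<infinity>"
  shows "(\<Sum>i<N. v i) \<le> enn2real S"
proof -
  have "ennreal (\<Sum>i<N. v i) = (\<Sum>i<N. ennreal (v i))"
    using assms(1) by (simp add: sum_ennreal)
  also have "\<dots> \<le> (\<Sum>i. ennreal (v i))" by (rule sum_le_suminf[OF summableI]) auto
  finally have "ennreal (\<Sum>i<N. v i) \<le> S" using assms(2) by simp
  then have "enn2real (ennreal (\<Sum>i<N. v i)) \<le> enn2real S"
    using assms(3) by (intro enn2real_mono) (auto simp: top.not_eq_extremum)
  then show ?thesis using assms(1) by (simp add: sum_nonneg)
qed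

theorem lemma9p4:
  fixes M :: "'a measure" and T :: "'a \<Rightarrow> 'a" and A :: "'a set" and p \<delta> :: real
  assumes "prob_space M"
    and "T \<in> measurable M M" and "bij_betw T (space M) (space M)"
    and "the_inv_into (space M) T \<in> measurable M M"
    and "distr M M T = M"
    and "A \<in> sets M" and "measure M A > 0"
    and "p > 0"
    and "AE x in M. visit_time T A 1 x \<noteq> \<infinity>"
    and "in_Lp M p (\<lambda>x. real (the_enat (visit_time T A 1 x)))"
    and "0 < \<delta>" and "\<delta> < p"
  shows "\<exists>B. in_Lp M (p / 2 - \<delta>) B \<and>
    (AE x in M. \<forall>k\<ge>1. visit_time T A k x \<noteq> \<infinity> \<and>
        real (the_enat (visit_time T A k x)) \<le> B x * real k powr (1 + 1 / p + \<delta>))"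
proof -
  interpret prob_space M by fact
  define f where "f x = real (the_enat (visit_time T A 1 x))" for x
  have Lp: "(\<lambda>x. real (the_enat (visit_time T A 1 x))) \<in> borel_measurable M \<and>
      integrable M (\<lambda>x. \<bar>real (the_enat (visit_time T A 1 x))\<bar> powr p)"
    using assms(10) unfolding in_Lp_def .
  have fm[measurable]: "f \<in> borel_measurable M"
    unfolding f_def[abs_def] by (rule conjunct1[OF Lp])
  have fint: "integrable M (\<lambda>x. \<bar>f x\<bar> powr p)"
    unfolding f_def by (rule conjunct2[OF Lp])
  have Tm[measurable]: "T \<in> measurable M M" by fact
  have Tn[measurable]: "(T ^^ i) \<in> measurable M M" for i
  proof (induction i)
    case 0 show ?case by (simp add: measurable_ident)
  next
    case (Suc i) show ?case unfolding funpow.simps by (rule measurable_comp[OF Suc Tm])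
  qed
  have Dn: "distr M M (T ^^ i) = M" for i
  proof (induction i)
    case 0 then show ?case by (simp add: distr_id2)
  next
    case (Suc i)
    have "distr M M (T ^^ Suc i) = distr (distr M M (T ^^ i)) M T"
      by (simp add: distr_distr[OF Tm Tn])
    also have "\<dots> = M" using Suc.IH assms(5) by (simp only:)
    finally show ?case .
  qed
  define \<epsilon> where "\<epsilon> = min (p / 2) (\<delta> * p^2 / (2 * (1 + p)))"
  have e0: "0 < \<epsilon>" and e1: "\<epsilon> \<le> p / 2" and eg: "(1 + p) / (p - \<epsilon>) \<le> 1 + 1 / p + \<delta>"
    using exp_bound[OF assms(8) assms(11)] unfolding \<epsilon>_def by auto
  define e where "e = p - \<epsilon>"
  have epos: "0 < e" and ep2: "p / 2 \<le> e" using e1 assms(8) unfolding e_def by auto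
  define cc where "cc i = real (Suc i) powr (- (1 + \<epsilon>))" for i
  have cc0: "0 \<le> cc i" for i unfolding cc_def by simp
  have ccs: "summable cc"
  proof -
    have "summable (\<lambda>n. real n powr (- (1 + \<epsilon>)))" using e0 by (simp add: summable_real_powr_iff)
    then show ?thesis unfolding cc_def by (subst summable_Suc_iff)
  qed
  define u where "u i x = ennreal (\<bar>f ((T ^^ i) x)\<bar> powr p * cc i)" for i x
  define S' where "S' x = (\<Sum>i. u i x)" for x
  have um[measurable]: "u i \<in> borel_measurable M" for i unfolding u_def by measurable
  have S'm[measurable]: "S' \<in> borel_measurable M" unfolding S'_def by measurable
  define I where "I = (\<integral>\<^sup>+x. ennreal (\<bar>f x\<bar> powr p) \<partial>M)"
  have Ifin: "I < \<infinity>" using integrableD(2)[OF fint] unfolding I_def by (simp add: less_top)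
  have ui: "integral\<^sup>N M (u i) = I * ennreal (cc i)" for i
  proof -
    have "integral\<^sup>N M (u i) = (\<integral>\<^sup>+x. ennreal (\<bar>f ((T ^^ i) x)\<bar> powr p) * ennreal (cc i) \<partial>M)"
      unfolding u_def using cc0 by (simp add: ennreal_mult)
    also have "\<dots> = (\<integral>\<^sup>+x. ennreal (\<bar>f ((T ^^ i) x)\<bar> powr p) \<partial>M) * ennreal (cc i)"
      by (rule nn_integral_multc) measurable
    also have "(\<integral>\<^sup>+x. ennreal (\<bar>f ((T ^^ i) x)\<bar> powr p) \<partial>M)
        = integral\<^sup>N (distr M M (T ^^ i)) (\<lambda>x. ennreal (\<bar>f x\<bar> powr p))"
      by (rule nn_integral_distr[symmetric]) (simp_all add: Dn)
    finally show ?thesis unfolding I_def Dn by simp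
  qed
  have "integral\<^sup>N M S' = (\<Sum>i. integral\<^sup>N M (u i))"
    unfolding S'_def by (rule nn_integral_suminf) measurable
  also have "\<dots> = I * ennreal (suminf cc)"
    using ccs cc0 by (simp add: ui ennreal_suminf_cmult suminf_ennreal2)
  finally have S'fin: "integral\<^sup>N M S' \<noteq> \<infinity>" using Ifin
    by (simp add: ennreal_mult_less_top top.not_eq_extremum)
  have AE1: "AE x in M. S' x \<noteq> \<infinity>" by (rule nn_integral_noteq_infinite[OF S'm S'fin])
  have AE2: "AE x in M. \<forall>i. visit_time T A 1 ((T ^^ i) x) \<noteq> \<infinity>"
  proof (subst AE_all_countable, intro allI)
    fix i
    show "AE x in M. visit_time T A 1 ((T ^^ i) x) \<noteq> \<infinity>"
      by (rule AE_distrD[OF Tn]) (unfold Dn, rule assms(9))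
  qed
  define Sr where "Sr x = enn2real (S' x)" for x
  define c :: real where "c = 2 powr (1 + p)"
  define B where "B x = (c * Sr x) powr (1 / e) + 1" for x
  have Sr0: "0 \<le> Sr x" for x unfolding Sr_def by simp
  have c0: "0 < c" unfolding c_def by simp
  have Bm[measurable]: "B \<in> borel_measurable M" unfolding B_def Sr_def by measurable
  have Srint: "integrable M Sr"
  proof (rule integrableI_bounded)
    show "Sr \<in> borel_measurable M" unfolding Sr_def by measurable
    have "(\<integral>\<^sup>+x. ennreal (norm (Sr x)) \<partial>M) \<le> integral\<^sup>N M S'"
      by (intro nn_integral_mono) (simp add: Sr_def ennreal_enn2real_if)
    then show "(\<integral>\<^sup>+x. ennreal (norm (Sr x)) \<partial>M) < \<infinity>"
      using S'fin by (simp add: top.not_eq_extremum le_less_trans)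
  qed
  have Bbound: "\<bar>B x\<bar> powr (p / 2 - \<delta>) \<le> 2 powr e * (c * Sr x + 1)" for x
  proof -
    define X where "X = (c * Sr x) powr (1 / e)"
    have X0: "0 \<le> X" unfolding X_def by simp
    have Xe: "X powr e = c * Sr x" unfolding X_def using epos c0 Sr0[of x]
      by (simp add: powr_powr)
    have B1: "1 \<le> B x" unfolding B_def using X0 X_def by simp
    have "\<bar>B x\<bar> powr (p / 2 - \<delta>) = B x powr (p / 2 - \<delta>)" using B1 by simp
    also have "\<dots> \<le> B x powr e" using B1 ep2 assms(11) by (intro powr_mono) auto
    also have "\<dots> \<le> (2 * max X 1) powr e"
      unfolding B_def X_def[symmetric] using X0 epos by (intro powr_mono2) auto
    also have "\<dots> = 2 powr e * (max X 1) powr e" using X0 by (simp add: powr_mult)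
    also have "(max X 1) powr e \<le> c * Sr x + 1"
      using Xe epos c0 Sr0[of x] by (cases "X \<le> 1") (auto simp: max_def)
    finally show ?thesis by simp
  qed
  have inLp: "in_Lp M (p / 2 - \<delta>) B"
    unfolding in_Lp_def
  proof (intro conjI Bm)
    have "integrable M (\<lambda>x. 2 powr e * (c * Sr x + 1))"
      using Srint by (intro integrable_mult_right integrable_add) auto
    then show "integrable M (\<lambda>x. \<bar>B x\<bar> powr (p / 2 - \<delta>))"
    proof (rule Bochner_Integration.integrable_bound)
      show "(\<lambda>x. \<bar>B x\<bar> powr (p / 2 - \<delta>)) \<in> borel_measurable M" by measurable
      show "AE x in M. norm (\<bar>B x\<bar> powr (p / 2 - \<delta>)) \<le> norm (2 powr e * (c * Sr x + 1))"
        using Bbound Sr0 c0 by (intro AE_I2) (simp add: abs_of_nonneg)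
    qed
  qed
  have "AE x in M. \<forall>k\<ge>1. visit_time T A k x \<noteq> \<infinity> \<and>
        real (the_enat (visit_time T A k x)) \<le> B x * real k powr (1 + 1 / p + \<delta>)"
    using AE1 AE2
  proof eventually_elim
    case (elim x)
    note H = elim(2)
    show ?case
    proof (intro allI impI)
      fix k :: nat assume k: "1 \<le> k"
      define N where "N = mmv T A x k"
      have vt: "visit_time T A k x = enat N" unfolding N_def by (rule vt_eq[OF H])
      have kN: "k \<le> N" unfolding N_def by (rule mmv_ge[OF H])
      have bb: "(real N / (2 * real k)) powr (1 + p) \<le> (\<Sum>i<N. real (nxt T A x i - i) powr p)"
        unfolding N_def by (rule block_bound[OF H k assms(8)])
      have fi: "real (nxt T A x i - i) = f ((T ^^ i) x)" for i
        unfolding f_def using F_eq[OF H, of i] by simp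
      have "(\<Sum>i<N. real (nxt T A x i - i) powr p)
          \<le> (\<Sum>i<N. real N powr (1 + \<epsilon>) * (\<bar>f ((T ^^ i) x)\<bar> powr p * cc i))"
      proof (intro sum_mono)
        fix i assume i: "i \<in> {..<N}"
        have "real (nxt T A x i - i) powr p = \<bar>f ((T ^^ i) x)\<bar> powr p"
          using fi[of i] by simp
        also have "\<dots> = real (Suc i) powr (1 + \<epsilon>) * (\<bar>f ((T ^^ i) x)\<bar> powr p * cc i)"
          unfolding cc_def by (simp add: powr_add[symmetric] mult.left_commute)
        also have "\<dots> \<le> real N powr (1 + \<epsilon>) * (\<bar>f ((T ^^ i) x)\<bar> powr p * cc i)"
          using i cc0[of i] e0 by (intro mult_right_mono powr_mono2) auto
        finally show "real (nxt T A x i - i) powr p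
            \<le> real N powr (1 + \<epsilon>) * (\<bar>f ((T ^^ i) x)\<bar> powr p * cc i)" .
      qed
      also have "\<dots> = real N powr (1 + \<epsilon>) * (\<Sum>i<N. \<bar>f ((T ^^ i) x)\<bar> powr p * cc i)"
        by (simp add: sum_distrib_left)
      also have "\<dots> \<le> real N powr (1 + \<epsilon>) * Sr x"
        unfolding Sr_def
        by (intro mult_left_mono sum_bound) (use cc0 elim(1) in \<open>auto simp: S'_def u_def\<close>)
      finally have main: "(real N / (2 * real k)) powr (1 + p) \<le> Sr x * real N powr (1 + \<epsilon>)"
        using bb by (simp add: mult.commute)
      have "real N \<le> (c * Sr x) powr (1 / e) * real k powr ((1 + p) / e)"
        unfolding c_def e_def
        by (rule alg_bound[OF _ _ Sr0 e0 _ main]) (use kN k e1 assms(8) in auto)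
      also have "\<dots> \<le> B x * real k powr (1 + 1 / p + \<delta>)"
        unfolding B_def using k eg unfolding e_def[symmetric]
        by (intro mult_mono powr_mono) auto
      finally show "visit_time T A k x \<noteq> \<infinity> \<and>
        real (the_enat (visit_time T A k x)) \<le> B x * real k powr (1 + 1 / p + \<delta>)"
        using vt by simp
    qed
  qed
  with inLp show ?thesis by blast
qed

end
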